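(* Let $p$ be a positive integer, $L,E,\sigma>0$ with $L,E\in 2^{-p}\mathbb{Z}$, and $\epsilon>0$ with $\sigma\ge L/\epsilon$. Then the truncated cumulative Laplace mechanism $\mathcal{M}^{(\mathtt{CLap})}_{L,E,\sigma,p}:\mathcal{A}_{p,E}\to\mathcal{B}_{p,L+E}$ is $\epsilon$-differentially private in the sense that for all $x_1,x_2\in\mathcal{A}_{p,E}$ and all $y\in\mathcal{B}_{p,L+E}$, $f^{(\mathtt{CLap})}_{x_1,\sigma}(y)\le e^{\epsilon}f^{(\mathtt{CLap})}_{x_2,\sigma}(y)$.
   Context: For $p\in\mathbb{Z}_{>0}$ and $B>0$, $2^{-p}\mathbb{Z}=\{a/2^p: a\in\mathbb{Z}\}$, $\mathcal{A}_{p,B}:=[-B,B]\cap 2^{-p}\mathbb{Z}$ and $\mathcal{B}_{p,B}:=\mathcal{A}_{p,B}\setminus\{B\}$. The truncated cumulative Laplace mechanism $\mathcal{M}^{(\mathtt{CLap})}_{L,E,\sigma,p}$ with parameters $L,E,\sigma>0$ maps $x\in\mathcal{A}_{p,E}$ to $y\in\mathcal{B}_{p,L+E}$ with probability $f^{(\mathtt{CLap})}_{x,\sigma}(y)=\frac{1}{\lambda^{(\mathtt{CLap})}_{L,E,\sigma}}\int_y^{y+2^{-p}}e^{-\min(|r-x|,L)/\sigma}dr$, where $\lambda^{(\mathtt{CLap})}_{L,E,\sigma}=\sum_{y\in\mathcal{B}_{p,L+E}}\int_y^{y+2^{-p}}e^{-\min(|r-x|,L)/\sigma}dr$ is the normalizing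 constant (independent of $x$). *)

theory Defs
  imports "HOL-Analysis.Analysis"
begin

definition dyadic_grid :: "nat \<Rightarrow> real set" where
  "dyadic_grid p = {r. \<exists>a::int. r = real_of_int a / 2 ^ p}"

definition setA :: "nat \<Rightarrow> real \<Rightarrow> real set" where
  "setA p B = {-B..B} \<inter> dyadic_grid p"

definition setB :: "nat \<Rightarrow> real \<Rightarrow> real set" where
  "setB p B = setA p B - {B}"

definition clap_mass :: "real \<Rightarrow> real \<Rightarrow> nat \<Rightarrow> real \<Rightarrow> real \<Rightarrow> real" where
  "clap_mass L \<sigma> p x y =
     integral {y..y + 1 / 2 ^ p} (\<lambda>r. exp (- min \<bar>r - x\<bar> L / \<sigma>))"

definition clap_lambda :: "real \<Rightarrow> real \<Rightarrow> real \<Rightarrow> nat \<Rightarrow> real \<Rightarrow> real" where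
  "clap_lambda L E \<sigma> p x = (\<Sum>y\<in>setB p (L + E). clap_mass L \<sigma> p x y)"

definition clap_f :: "real \<Rightarrow> real \<Rightarrow> real \<Rightarrow> nat \<Rightarrow> real \<Rightarrow> real \<Rightarrow> real" where
  "clap_f L E \<sigma> p x y = clap_mass L \<sigma> p x y / clap_lambda L E \<sigma> p x"

end

theory Submission
  imports Defs
begin

lemma g_cont: fixes x L \<sigma> :: real shows "continuous_on S (\<lambda>r. exp (- min \<bar>r - x\<bar> L / \<sigma>))"
  unfolding divide_inverse by (intro continuous_intros)

lemma g_int: fixes x L \<sigma> a b :: real shows "(\<lambda>r. exp (- min \<bar>r - x\<bar> L / \<sigma>)) integrable_on {a..b}"
  by (rule integrable_continuous_interval[OF g_cont])

lemma sum_bins: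
  fixes q x L \<sigma> :: real and a :: int
  assumes q: "q > 0"
  shows "(\<Sum>k\<in>{a..<a+int n}. integral {of_int k / q .. of_int k / q + 1/q}
            (\<lambda>r. exp (- min \<bar>r - x\<bar> L / \<sigma>)))
        = integral {of_int a / q .. (of_int a + real n) / q} (\<lambda>r. exp (- min \<bar>r - x\<bar> L / \<sigma>))"
proof (induction n)
  case 0
  then show ?case by simp
next
  case (Suc n)
  have s: "{a..<a+int (Suc n)} = insert (a + int n) {a..<a+int n}" by auto
  have e: "of_int (a + int n) / q + 1/q = (of_int a + real (Suc n)) / q"
    by (simp add: add_divide_distrib)
  have e2: "of_int (a + int n) / q = (of_int a + real n) / q" by simp
  have "integral {of_int a / q .. (of_int a + real n) / q} (\<lambda>r. exp (- min \<bar>r - x\<bar> L / \<sigma>))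
     + integral {(of_int a + real n) / q .. (of_int a + real (Suc n)) / q} (\<lambda>r. exp (- min \<bar>r - x\<bar> L / \<sigma>))
     = integral {of_int a / q .. (of_int a + real (Suc n)) / q} (\<lambda>r. exp (- min \<bar>r - x\<bar> L / \<sigma>))"
    by (rule Henstock_Kurzweil_Integration.integral_combine[OF _ _ g_int]) (use q in \<open>auto simp: divide_right_mono g_int\<close>)
  then show ?case using Suc s e e2 by (simp add: add.commute)
qed

lemma mid_piece: fixes x L \<sigma> :: real shows
  "integral {x - L .. x + L} (\<lambda>r. exp (- min \<bar>r - x\<bar> L / \<sigma>))
   = integral {-L..L} (\<lambda>t. exp (- min \<bar>t\<bar> L / \<sigma>))"
proof -
  have "integral {-L..L} ((\<lambda>r. exp (- min \<bar>r - x\<bar> L / \<sigma>)) \<circ> (+) x)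
        = integral {-L+x..L+x} (\<lambda>r. exp (- min \<bar>r - x\<bar> L / \<sigma>))"
    by (rule integral_shift_Icc_real)
  moreover have "((\<lambda>r. exp (- min \<bar>r - x\<bar> L / \<sigma>)) \<circ> (+) x) = (\<lambda>t. exp (- min \<bar>t\<bar> L / \<sigma>))"
    by (auto simp: o_def)
  ultimately show ?thesis by (simp add: add.commute)
qed

lemma total_integral:
  fixes L E \<sigma> x :: real
  assumes "L > 0" "\<bar>x\<bar> \<le> E"
  shows "integral {-(L+E)..L+E} (\<lambda>r. exp (- min \<bar>r - x\<bar> L / \<sigma>))
     = 2 * E * exp (- L / \<sigma>) + integral {-L..L} (\<lambda>t. exp (- min \<bar>t\<bar> L / \<sigma>))"
proof -
  let ?g = "\<lambda>r. exp (- min \<bar>r - x\<bar> L / \<sigma>)"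
  have c1: "integral {-(L+E)..x-L} ?g + integral {x-L..L+E} ?g = integral {-(L+E)..L+E} ?g"
    by (rule Henstock_Kurzweil_Integration.integral_combine[OF _ _ g_int]) (use assms in \<open>auto simp: g_int\<close>)
  have c2: "integral {x-L..x+L} ?g + integral {x+L..L+E} ?g = integral {x-L..L+E} ?g"
    by (rule Henstock_Kurzweil_Integration.integral_combine[OF _ _ g_int]) (use assms in \<open>auto simp: g_int\<close>)
  have p1: "integral {-(L+E)..x-L} ?g = integral {-(L+E)..x-L} (\<lambda>_. exp (- L / \<sigma>))"
    by (rule integral_cong) (auto simp: min_def)
  have p3: "integral {x+L..L+E} ?g = integral {x+L..L+E} (\<lambda>_. exp (- L / \<sigma>))"
    by (rule integral_cong) (auto simp: min_def)
  have k1: "integral {-(L+E)..x-L} (\<lambda>_. exp (- L / \<sigma>)) = (x - L + (L+E)) * exp (- L / \<sigma>)"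
    using assms by simp
  have k3: "integral {x+L..L+E} (\<lambda>_. exp (- L / \<sigma>)) = (L + E - (x + L)) * exp (- L / \<sigma>)"
    using assms by simp
  show ?thesis using c1 c2 p1 p3 k1 k3 mid_piece[of x L \<sigma>]
    by (simp add: algebra_simps)
qed

lemma lambda_eq:
  fixes p :: nat and L E \<sigma> x :: real
  assumes "L > 0" "E > 0" "L \<in> dyadic_grid p" "E \<in> dyadic_grid p" "x \<in> setA p E"
  shows "clap_lambda L E \<sigma> p x
     = 2 * E * exp (- L / \<sigma>) + integral {-L..L} (\<lambda>t. exp (- min \<bar>t\<bar> L / \<sigma>))"
proof -
  define q :: real where "q = 2 ^ p"
  have q: "q > 0" by (simp add: q_def)
  obtain a b :: int where a: "L = of_int a / q" and b: "E = of_int b / q"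
    using assms(3,4) unfolding dyadic_grid_def q_def by auto
  define N where "N = a + b"
  have M: "L + E = of_int N / q" by (simp add: a b N_def add_divide_distrib)
  have Npos: "N \<ge> 0" using assms(1,2) M q
  proof -
    have "of_int N / q > 0" using assms(1,2) M by linarith
    then have "(of_int N :: real) > 0" using q by (simp add: zero_less_divide_iff)
    then show ?thesis by simp
  qed
  have setB_eq: "setB p (L+E) = (\<lambda>k. of_int k / q) ` {-N..<N}"
  proof (rule set_eqI)
    fix y
    show "y \<in> setB p (L+E) \<longleftrightarrow> y \<in> (\<lambda>k. of_int k / q) ` {-N..<N}"
    proof
      assume "y \<in> setB p (L+E)"
      then obtain k :: int where y: "y = of_int k / q" and h1: "- (of_int N / q) \<le> y"
        and h2: "y \<le> of_int N / q" and h3: "y \<noteq> of_int N / q"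
        unfolding setB_def setA_def dyadic_grid_def q_def[symmetric] M by auto
      have "of_int (-N) / q \<le> of_int k / q" using h1 unfolding y by simp
      then have "real_of_int (-N) \<le> of_int k" using q by (simp add: field_simps)
      then have "-N \<le> k" by linarith
      moreover have "k \<le> N" using h2 q unfolding y by (simp add: divide_le_cancel)
      moreover have "k \<noteq> N" using h3 unfolding y by auto
      ultimately show "y \<in> (\<lambda>k. of_int k / q) ` {-N..<N}" using y by auto
    next
      assume "y \<in> (\<lambda>k. of_int k / q) ` {-N..<N}"
      then obtain k where k: "-N \<le> k" "k < N" and y: "y = of_int k / q" by auto
      have "real_of_int (-N) \<le> of_int k" using k by simp
      then have "- (of_int N / q) \<le> y" using q unfolding y
        by (simp add: field_simps)
      moreover have "y \<le> of_int N / q" using k q unfolding y by (simp add: divide_le_cancel)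
      moreover have "y \<noteq> of_int N / q" using k q unfolding y by auto
      ultimately show "y \<in> setB p (L+E)"
        unfolding setB_def setA_def dyadic_grid_def q_def[symmetric] M y by auto
    qed
  qed
  have inj: "inj_on (\<lambda>k. of_int k / q) {-N..<N}" using q by (auto simp: inj_on_def)
  have xE: "\<bar>x\<bar> \<le> E" using assms(5) unfolding setA_def by auto
  have "clap_lambda L E \<sigma> p x = (\<Sum>k\<in>{-N..<N}. integral {of_int k / q .. of_int k / q + 1/q}
            (\<lambda>r. exp (- min \<bar>r - x\<bar> L / \<sigma>)))"
    unfolding clap_lambda_def clap_mass_def setB_eq q_def[symmetric] by (simp add: sum.reindex[OF inj])
  also have "\<dots> = (\<Sum>k\<in>{-N..<-N + int (nat (2*N))}. integral {of_int k / q .. of_int k / q + 1/q}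
            (\<lambda>r. exp (- min \<bar>r - x\<bar> L / \<sigma>)))"
    using Npos by (intro sum.cong) auto
  also have "\<dots> = integral {of_int (-N) / q .. (of_int (-N) + real (nat (2*N))) / q}
            (\<lambda>r. exp (- min \<bar>r - x\<bar> L / \<sigma>))"
    by (rule sum_bins[OF q])
  also have "{of_int (-N) / q .. (of_int (-N) + real (nat (2*N))) / q} = {-(L+E)..L+E}"
    using Npos unfolding M by simp
  also have "integral {-(L+E)..L+E} (\<lambda>r. exp (- min \<bar>r - x\<bar> L / \<sigma>)) = 
     2 * E * exp (- L / \<sigma>) + integral {-L..L} (\<lambda>t. exp (- min \<bar>t\<bar> L / \<sigma>))"
    by (rule total_integral[OF assms(1) xE])
  finally show ?thesis .
qed

theorem mainTheorem9:
  fixes p :: nat and L E \<sigma> \<epsilon> :: real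
  assumes "p > 0"
    and "L > 0" and "E > 0" and "\<sigma> > 0"
    and "L \<in> dyadic_grid p" and "E \<in> dyadic_grid p"
    and "\<epsilon> > 0" and "\<sigma> \<ge> L / \<epsilon>"
  shows "\<forall>x1\<in>setA p E. \<forall>x2\<in>setA p E. \<forall>y\<in>setB p (L + E).
           clap_f L E \<sigma> p x1 y \<le> exp \<epsilon> * clap_f L E \<sigma> p x2 y"
proof (intro ballI)
  fix x1 x2 y
  assume x1: "x1 \<in> setA p E" and x2: "x2 \<in> setA p E" and y: "y \<in> setB p (L + E)"
  define lam where "lam = 2 * E * exp (- L / \<sigma>) + integral {-L..L} (\<lambda>t. exp (- min \<bar>t\<bar> L / \<sigma>))"
  have l1: "clap_lambda L E \<sigma> p x1 = lam" and l2: "clap_lambda L E \<sigma> p x2 = lam"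
    using lambda_eq[OF assms(2,3,5,6) x1] lambda_eq[OF assms(2,3,5,6) x2] lam_def by auto
  have lam0: "lam \<ge> 0" unfolding lam_def
    by (intro add_nonneg_nonneg integral_nonneg) (use assms g_int[of 0 L \<sigma>] in auto)
  have Ls: "L / \<sigma> \<le> \<epsilon>" using assms by (simp add: divide_le_eq mult.commute)
  have pw: "exp (- min \<bar>r - x1\<bar> L / \<sigma>) \<le> exp \<epsilon> * exp (- min \<bar>r - x2\<bar> L / \<sigma>)" for r
  proof -
    have "exp (- min \<bar>r - x1\<bar> L / \<sigma>) \<le> 1" using assms by auto
    also have "1 \<le> exp (\<epsilon> - L / \<sigma>)" using Ls by simp
    also have "\<dots> \<le> exp (\<epsilon> - min \<bar>r - x2\<bar> L / \<sigma>)"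
      using assms by (auto intro: divide_right_mono)
    finally show ?thesis by (simp add: exp_diff exp_minus field_simps)
  qed
  have int2: "(\<lambda>r. exp \<epsilon> * exp (- min \<bar>r - x2\<bar> L / \<sigma>)) integrable_on {y..y + 1 / 2 ^ p}"
    unfolding divide_inverse by (intro integrable_continuous_interval continuous_intros)
  have "clap_mass L \<sigma> p x1 y \<le> integral {y..y + 1 / 2 ^ p} (\<lambda>r. exp \<epsilon> * exp (- min \<bar>r - x2\<bar> L / \<sigma>))"
    unfolding clap_mass_def
    by (rule integral_le[OF g_int int2 pw])
  also have "\<dots> = exp \<epsilon> * clap_mass L \<sigma> p x2 y"
    unfolding clap_mass_def by simp
  finally have m: "clap_mass L \<sigma> p x1 y \<le> exp \<epsilon> * clap_mass L \<sigma> p x2 y" .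
  show "clap_f L E \<sigma> p x1 y \<le> exp \<epsilon> * clap_f L E \<sigma> p x2 y"
    unfolding clap_f_def l1 l2 using divide_right_mono[OF m lam0] by simp
qed

end
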